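(* There is a universal constant $C>0$ such that the following holds. Let $\delta\in(0,1]$, $k\geq 12/\delta^2$, $m\geq 4$, and let $T=(t_{ij})$ be an $m\times k$ real matrix. Then for any $y\in S^{k-1}$ there is a coordinate projection $P:\mathbb{R}^k\to\mathbb{R}^k$ with $\mathrm{rank}\,P\leq\delta k$ such that $$C^{-1}\delta^2\min_{\ell\leq m}|Ty|_\ell\leq\frac{\max_{i,j}|t_{ij}|}{\sqrt{k}}+\textstyle\max^{(\lfloor m/4\rfloor)}_{\ell\in[m]}|TP(y)|_\ell.$$
   Context: A coordinate projection is the orthogonal projection onto $\mathrm{span}\{e_j\}_{j\in J}$ for some subset $J$ of coordinates. For $v\in\mathbb{R}^m$, $|v|\in\mathbb{R}^m_+$ is the vector of absolute values of the coordinates, and $|v|_\ell$ its $\ell$-th coordinate. For a non-negative sequence $(a_\ell)_{\ell\in J}$ and $k\in\mathbb{N}$, $\max^{(k)}_{\ell\in J}a_\ell$ denotes its $k$-th largest element ($0$ if $k>|J|$). *)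

theory Defs
  imports Complex_Main
begin

text \<open>Vectors in R^k are represented as functions nat => real, relevant on {..<k};
  an m x k matrix T as nat => nat => real, relevant on {..<m} x {..<k}.\<close>

definition mat_vec :: "nat \<Rightarrow> (nat \<Rightarrow> nat \<Rightarrow> real) \<Rightarrow> (nat \<Rightarrow> real) \<Rightarrow> nat \<Rightarrow> real" where
  "mat_vec k T y = (\<lambda>i. \<Sum>j<k. T i j * y j)"

definition coord_proj :: "nat set \<Rightarrow> (nat \<Rightarrow> real) \<Rightarrow> nat \<Rightarrow> real" where
  "coord_proj J y = (\<lambda>j. if j \<in> J then y j else 0)"

text \<open>r-th largest element of (a l) for l in finite J (counted with multiplicity);
  0 if r > card J (and, by convention, if r = 0).\<close>
definition kth_largest :: "nat \<Rightarrow> nat set \<Rightarrow> (nat \<Rightarrow> real) \<Rightarrow> real" where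
  "kth_largest r J a =
     (if r = 0 \<or> r > card J then 0
      else rev (sort (map a (sorted_list_of_set J))) ! (r - 1))"

end

theory Submission
  imports Defs
begin


definition Ew :: "real \<Rightarrow> nat set \<Rightarrow> (nat set \<Rightarrow> real) \<Rightarrow> real" where
  "Ew p A F = (\<Sum>D\<in>Pow A. p ^ card D * (1 - p) ^ (card A - card D) * F D)"

lemma Ew_empty[simp]: "Ew p {} F = F {}"
  by (simp add: Ew_def)

lemma Ew_insert:
  assumes "finite A" "x \<notin> A"
  shows "Ew p (insert x A) F = (1 - p) * Ew p A F + p * Ew p A (\<lambda>D. F (insert x D))"
proof -
  have inj: "inj_on (insert x) (Pow A)"
    using assms(2) by (auto simp: inj_on_def)
  have disj: "Pow A \<inter> insert x ` Pow A = {}" using assms(2) by auto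
  have fin: "finite (Pow A)" using assms(1) by simp
  have cA: "card (insert x A) = Suc (card A)" using assms by simp
  have "Ew p (insert x A) F = (\<Sum>D\<in>Pow A. p ^ card D * (1 - p) ^ (Suc (card A) - card D) * F D)
      + (\<Sum>D\<in>insert x ` Pow A. p ^ card D * (1 - p) ^ (Suc (card A) - card D) * F D)"
    unfolding Ew_def Pow_insert cA using fin disj by (simp add: sum.union_disjoint)
  also have "(\<Sum>D\<in>Pow A. p ^ card D * (1 - p) ^ (Suc (card A) - card D) * F D)
      = (1 - p) * Ew p A F"
    unfolding Ew_def sum_distrib_left
  proof (rule sum.cong[OF refl])
    fix D assume "D \<in> Pow A"
    then have "card D \<le> card A" using assms(1) by (simp add: card_mono)
    then have "Suc (card A) - card D = Suc (card A - card D)" by simp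
    then show "p ^ card D * (1 - p) ^ (Suc (card A) - card D) * F D =
          (1 - p) * (p ^ card D * (1 - p) ^ (card A - card D) * F D)" by simp
  qed
  also have "(\<Sum>D\<in>insert x ` Pow A. p ^ card D * (1 - p) ^ (Suc (card A) - card D) * F D)
      = p * Ew p A (\<lambda>D. F (insert x D))"
    unfolding Ew_def sum_distrib_left sum.reindex[OF inj] o_def
  proof (rule sum.cong[OF refl])
    fix D assume D: "D \<in> Pow A"
    then have fD: "finite D" using assms(1) finite_subset by auto
    have xD: "x \<notin> D" using D assms(2) by auto
    have "card D \<le> card A" using D assms(1) by (simp add: card_mono)
    then show "p ^ card (insert x D) * (1 - p) ^ (Suc (card A) - card (insert x D)) * F (insert x D) =
          p * (p ^ card D * (1 - p) ^ (card A - card D) * F (insert x D))"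
    proof -
      have "card (insert x D) = Suc (card D)" using fD xD by simp
      then show ?thesis by (simp add: algebra_simps)
    qed
  qed
  finally show ?thesis .
qed

lemma Ew_cong: "(\<And>D. D \<subseteq> A \<Longrightarrow> F D = G D) \<Longrightarrow> Ew p A F = Ew p A G"
  unfolding Ew_def by (rule sum.cong) auto

lemma Ew_add: "Ew p A (\<lambda>D. F D + G D) = Ew p A F + Ew p A G"
  unfolding Ew_def by (simp add: algebra_simps sum.distrib)

lemma Ew_cmult: "Ew p A (\<lambda>D. c * F D) = c * Ew p A F"
  unfolding Ew_def by (simp add: algebra_simps sum_distrib_left)

lemma Ew_diff: "Ew p A (\<lambda>D. F D - G D) = Ew p A F - Ew p A G"
  unfolding Ew_def by (simp add: algebra_simps sum_subtractf)

lemma Ew_sum: "Ew p A (\<lambda>D. \<Sum>l\<in>I. F l D) = (\<Sum>l\<in>I. Ew p A (F l))"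
proof -
  have "Ew p A (\<lambda>D. \<Sum>l\<in>I. F l D) = (\<Sum>D\<in>Pow A. \<Sum>l\<in>I. p ^ card D * (1 - p) ^ (card A - card D) * F l D)"
    unfolding Ew_def by (simp add: sum_distrib_left)
  also have "\<dots> = (\<Sum>l\<in>I. \<Sum>D\<in>Pow A. p ^ card D * (1 - p) ^ (card A - card D) * F l D)"
    by (rule sum.swap)
  finally show ?thesis unfolding Ew_def .
qed

lemma Ew_one: "finite A \<Longrightarrow> Ew p A (\<lambda>D. 1) = 1"
proof (induction A rule: finite_induct)
  case empty then show ?case by simp
next
  case (insert x A) then show ?case by (simp add: Ew_insert)
qed

lemma Ew_const: "finite A \<Longrightarrow> Ew p A (\<lambda>D. c) = c"
  using Ew_cmult[of p A c "\<lambda>D. 1"] Ew_one by simp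

lemma Ew_mono:
  assumes "0 \<le> p" "p \<le> 1" "\<And>D. D \<subseteq> A \<Longrightarrow> F D \<le> G D"
  shows "Ew p A F \<le> Ew p A G"
  unfolding Ew_def
proof (rule sum_mono)
  fix D assume "D \<in> Pow A"
  then have "F D \<le> G D" using assms(3) by blast
  moreover have "0 \<le> p ^ card D * (1 - p) ^ (card A - card D)" using assms(1,2) by simp
  ultimately show "p ^ card D * (1 - p) ^ (card A - card D) * F D \<le> p ^ card D * (1 - p) ^ (card A - card D) * G D"
    by (rule mult_left_mono)
qed

lemma Ew_exists:
  assumes "finite A" "0 \<le> p" "p < 1" "c \<le> Ew p A F"
  shows "\<exists>D\<subseteq>A. c \<le> F D"
proof (rule ccontr)
  assume "\<not> ?thesis"
  then have lt: "\<And>D. D \<subseteq> A \<Longrightarrow> F D < c" by (meson not_le)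
  have "0 < p ^ card ({}::nat set) * (1 - p) ^ (card A - card ({}::nat set)) * (c - F {})"
    using lt[of "{}"] assms by simp
  also have "\<dots> \<le> Ew p A (\<lambda>D. c - F D)"
    unfolding Ew_def
  proof (rule member_le_sum[where f="\<lambda>D. p ^ card D * (1 - p) ^ (card A - card D) * (c - F D)"])
    show "{} \<in> Pow A" by simp
    show "finite (Pow A)" using assms(1) by simp
    fix D assume "D \<in> Pow A - {{}}"
    then have "F D < c" using lt by blast
    moreover have "0 \<le> p ^ card D * (1 - p) ^ (card A - card D)" using assms(2,3) by simp
    ultimately show "0 \<le> p ^ card D * (1 - p) ^ (card A - card D) * (c - F D)" by simp
  qed
  also have "\<dots> = c - Ew p A F" using Ew_diff[of p A "\<lambda>D. c" F] Ew_const[OF assms(1), of p c] by simp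
  finally show False using assms(4) by simp
qed



lemma sum_insert_sub: "D \<subseteq> A \<Longrightarrow> finite A \<Longrightarrow> x \<notin> A \<Longrightarrow> sum f (insert x D) = f x + sum f D"
  by (metis finite_subset subsetD sum.insert)

lemma Ew_lin1:
  assumes "finite A"
  shows "Ew p A (\<lambda>D. \<Sum>j\<in>D. f j) = p * (\<Sum>j\<in>A. f j)"
  using assms
proof (induction A rule: finite_induct)
  case empty then show ?case by simp
next
  case (insert x A)
  have "Ew p A (\<lambda>D. \<Sum>j\<in>insert x D. f j) = Ew p A (\<lambda>D. f x + (\<Sum>j\<in>D. f j))"
    by (rule Ew_cong) (use insert in \<open>simp add: sum_insert_sub\<close>)
  also have "\<dots> = f x + p * (\<Sum>j\<in>A. f j)"
    using Ew_add[of p A "\<lambda>D. f x"] Ew_const[OF insert(1)] insert(3) by simp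
  finally show ?case using insert by (simp add: Ew_insert algebra_simps)
qed

lemma Ew_sq:
  assumes "finite A"
  shows "Ew p A (\<lambda>D. (\<Sum>j\<in>D. f j)^2) = p^2 * (\<Sum>j\<in>A. f j)^2 + p * (1 - p) * (\<Sum>j\<in>A. (f j)^2)"
  using assms
proof (induction A rule: finite_induct)
  case empty then show ?case by simp
next
  case (insert x A)
  have "Ew p A (\<lambda>D. (\<Sum>j\<in>insert x D. f j)^2) = Ew p A (\<lambda>D. (f x)^2 + 2 * f x * (\<Sum>j\<in>D. f j) + (\<Sum>j\<in>D. f j)^2)"
    by (rule Ew_cong) (use insert in \<open>simp add: sum_insert_sub power2_eq_square algebra_simps\<close>)
  also have "\<dots> = (f x)^2 + 2 * f x * (p * (\<Sum>j\<in>A. f j)) + Ew p A (\<lambda>D. (\<Sum>j\<in>D. f j)^2)"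
    using Ew_add[of p A "\<lambda>D. (f x)^2 + 2 * f x * (\<Sum>j\<in>D. f j)" "\<lambda>D. (\<Sum>j\<in>D. f j)^2"]
      Ew_add[of p A "\<lambda>D. (f x)^2" "\<lambda>D. 2 * f x * (\<Sum>j\<in>D. f j)"]
      Ew_cmult[of p A "2 * f x" "\<lambda>D. (\<Sum>j\<in>D. f j)"]
      Ew_const[OF insert(1)] Ew_lin1[OF insert(1)] by simp
  finally have e: "Ew p A (\<lambda>D. (\<Sum>j\<in>insert x D. f j)^2) = (f x)^2 + 2 * f x * (p * (\<Sum>j\<in>A. f j)) + (p^2 * (\<Sum>j\<in>A. f j)^2 + p * (1 - p) * (\<Sum>j\<in>A. (f j)^2))"
    using insert(3) by simp
  have s1: "sum f (insert x A) = f x + sum f A"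
    and s2: "(\<Sum>j\<in>insert x A. (f j)^2) = (f x)^2 + (\<Sum>j\<in>A. (f j)^2)" using insert(1,2) by simp_all
  have "Ew p (insert x A) (\<lambda>D. (\<Sum>j\<in>D. f j)^2) = (1 - p) * Ew p A (\<lambda>D. (\<Sum>j\<in>D. f j)^2) + p * Ew p A (\<lambda>D. (\<Sum>j\<in>insert x D. f j)^2)"
    by (rule Ew_insert[OF insert(1,2)])
  also have "\<dots> = (1 - p) * (p^2 * (\<Sum>j\<in>A. f j)^2 + p * (1 - p) * (\<Sum>j\<in>A. (f j)^2)) + p * ((f x)^2 + 2 * f x * (p * (\<Sum>j\<in>A. f j)) + (p^2 * (\<Sum>j\<in>A. f j)^2 + p * (1 - p) * (\<Sum>j\<in>A. (f j)^2)))"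
    by (simp only: insert(3) e)
  also have "\<dots> = p^2 * (f x + sum f A)^2 + p * (1 - p) * ((f x)^2 + (\<Sum>j\<in>A. (f j)^2))"
    by (simp add: power2_eq_square algebra_simps)
  finally show ?case unfolding s1 s2 .
qed

lemma Ew_var:
  assumes "finite A"
  shows "Ew p A (\<lambda>D. ((\<Sum>j\<in>D. f j) - p * (\<Sum>j\<in>A. f j))^2) = p * (1 - p) * (\<Sum>j\<in>A. (f j)^2)"
proof -
  let ?G = "\<lambda>D. (\<Sum>j\<in>D. f j)" let ?m = "p * (\<Sum>j\<in>A. f j)"
  have "Ew p A (\<lambda>D. (?G D - ?m)^2) = Ew p A (\<lambda>D. (?G D)^2 + (-2 * ?m) * ?G D + ?m^2)"
    by (rule Ew_cong) (simp add: power2_eq_square algebra_simps)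
  also have "\<dots> = Ew p A (\<lambda>D. (?G D)^2) + (-2 * ?m) * Ew p A ?G + ?m^2"
    using Ew_add[of p A "\<lambda>D. (?G D)^2 + (-2 * ?m) * ?G D" "\<lambda>D. ?m^2"]
      Ew_add[of p A "\<lambda>D. (?G D)^2" "\<lambda>D. (-2 * ?m) * ?G D"]
      Ew_cmult[of p A "-2 * ?m" ?G] Ew_const[OF assms] by simp
  also have "\<dots> = p * (1 - p) * (\<Sum>j\<in>A. (f j)^2)"
    using Ew_sq[OF assms] Ew_lin1[OF assms] by (simp add: power2_eq_square algebra_simps)
  finally show ?thesis .
qed

lemma Ew_cheb:
  assumes "0 \<le> p" "p \<le> 1" "t > 0"
  shows "Ew p A (\<lambda>D. if t \<le> \<bar>g D - c\<bar> then 1 else 0) \<le> Ew p A (\<lambda>D. (g D - c)^2) / t^2"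
proof -
  have "Ew p A (\<lambda>D. if t \<le> \<bar>g D - c\<bar> then 1 else 0) \<le> Ew p A (\<lambda>D. (1 / t^2) * (g D - c)^2)"
  proof (rule Ew_mono[OF assms(1,2)])
    fix D
    show "(if t \<le> \<bar>g D - c\<bar> then 1 else 0) \<le> (1 / t^2) * (g D - c)^2"
    proof (cases "t \<le> \<bar>g D - c\<bar>")
      case True
      then have "t^2 \<le> (g D - c)^2" using assms(3)
        by (metis abs_le_square_iff abs_of_pos)
      then show ?thesis using True assms(3) by (simp add: field_simps)
    qed simp
  qed
  also have "\<dots> = (1 / t^2) * Ew p A (\<lambda>D. (g D - c)^2)" by (rule Ew_cmult)
  finally show ?thesis by simp
qed



definition Yr :: "(nat \<Rightarrow> real) \<Rightarrow> nat set \<Rightarrow> nat set \<Rightarrow> real" where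
  "Yr z D J = (\<Sum>j\<in>D. if j \<in> J then z j else - z j)"

lemma Yr_ins1:
  assumes "finite D" "x \<notin> D" "J \<subseteq> D"
  shows "Yr z (insert x D) J = Yr z D J - z x"
  using assms by (auto simp: Yr_def)

lemma Yr_ins2:
  assumes "finite D" "x \<notin> D" "J \<subseteq> D"
  shows "Yr z (insert x D) (insert x J) = Yr z D J + z x"
proof -
  have "Yr z D (insert x J) = Yr z D J"
    unfolding Yr_def by (rule sum.cong) (use assms in auto)
  then show ?thesis using assms by (simp add: Yr_def)
qed

lemma Ew_half_insert:
  assumes "finite D" "x \<notin> D"
  shows "Ew (1/2) (insert x D) F = Ew (1/2) D (\<lambda>J. (1/2) * F J + (1/2) * F (insert x J))"
  using Ew_insert[OF assms, of "1/2" F] Ew_add[of "1/2" D "\<lambda>J. (1/2) * F J" "\<lambda>J. (1/2) * F (insert x J)"]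
    Ew_cmult[of "1/2" D "1/2" F] Ew_cmult[of "1/2" D "1/2" "\<lambda>J. F (insert x J)"] by simp

lemma rad2:
  assumes "finite D"
  shows "Ew (1/2) D (\<lambda>J. (Yr z D J)^2) = (\<Sum>j\<in>D. (z j)^2)"
  using assms
proof (induction D rule: finite_induct)
  case empty then show ?case by (simp add: Yr_def)
next
  case (insert x D)
  have "Ew (1/2) (insert x D) (\<lambda>J. (Yr z (insert x D) J)^2)
      = Ew (1/2) D (\<lambda>J. (1/2) * (Yr z (insert x D) J)^2 + (1/2) * (Yr z (insert x D) (insert x J))^2)"
    by (rule Ew_half_insert[OF insert(1,2)])
  also have "\<dots> = Ew (1/2) D (\<lambda>J. (Yr z D J)^2 + (z x)^2)"
    by (rule Ew_cong) (simp add: Yr_ins1[OF insert(1,2)] Yr_ins2[OF insert(1,2)] power2_eq_square algebra_simps)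
  also have "\<dots> = (\<Sum>j\<in>D. (z j)^2) + (z x)^2"
    using Ew_add[of "1/2" D "\<lambda>J. (Yr z D J)^2" "\<lambda>J. (z x)^2"] Ew_const[OF insert(1)] insert(3) by simp
  finally show ?case using insert(1,2) by simp
qed

lemma rad4:
  assumes "finite D"
  shows "Ew (1/2) D (\<lambda>J. (Yr z D J)^4) \<le> 3 * (\<Sum>j\<in>D. (z j)^2)^2"
  using assms
proof (induction D rule: finite_induct)
  case empty then show ?case by (simp add: Yr_def)
next
  case (insert x D)
  let ?s = "\<Sum>j\<in>D. (z j)^2"
  have "Ew (1/2) (insert x D) (\<lambda>J. (Yr z (insert x D) J)^4)
      = Ew (1/2) D (\<lambda>J. (1/2) * (Yr z (insert x D) J)^4 + (1/2) * (Yr z (insert x D) (insert x J))^4)"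
    by (rule Ew_half_insert[OF insert(1,2)])
  also have "\<dots> = Ew (1/2) D (\<lambda>J. ((Yr z D J)^4 + (6 * (z x)^2) * (Yr z D J)^2) + (z x)^4)"
    by (rule Ew_cong) (simp add: Yr_ins1[OF insert(1,2)] Yr_ins2[OF insert(1,2)] power2_eq_square power4_eq_xxxx algebra_simps)
  also have "\<dots> = Ew (1/2) D (\<lambda>J. (Yr z D J)^4) + (6 * (z x)^2) * ?s + (z x)^4"
    using Ew_add[of "1/2" D "\<lambda>J. (Yr z D J)^4 + (6 * (z x)^2) * (Yr z D J)^2" "\<lambda>J. (z x)^4"]
      Ew_add[of "1/2" D "\<lambda>J. (Yr z D J)^4" "\<lambda>J. (6 * (z x)^2) * (Yr z D J)^2"]
      Ew_cmult[of "1/2" D "6 * (z x)^2" "\<lambda>J. (Yr z D J)^2"]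
      Ew_const[OF insert(1)] rad2[OF insert(1)] by simp
  also have "\<dots> \<le> 3 * ?s^2 + (6 * (z x)^2) * ?s + (z x)^4" using insert(3) by simp
  also have "\<dots> \<le> 3 * (?s + (z x)^2)^2"
  proof -
    have "0 \<le> 2 * (z x)^4" by simp
    moreover have "3 * (?s + (z x)^2)^2 = 3 * ?s^2 + (6 * (z x)^2) * ?s + (z x)^4 + 2 * (z x)^4"
      by (simp add: power2_eq_square power4_eq_xxxx algebra_simps)
    ultimately show ?thesis by linarith
  qed
  finally have fin: "Ew (1/2) (insert x D) (\<lambda>J. (Yr z (insert x D) J)^4) \<le> 3 * (?s + (z x)^2)^2" .
  have "(\<Sum>j\<in>insert x D. (z j)^2) = ?s + (z x)^2" using insert(1,2) by simp
  then show ?case using fin by simp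
qed

lemma PZ:
  assumes "finite D" "0 < lam" "lam < (\<Sum>j\<in>D. (z j)^2)"
  shows "((\<Sum>j\<in>D. (z j)^2) - lam)^2 / (3 * (\<Sum>j\<in>D. (z j)^2)^2)
         \<le> Ew (1/2) D (\<lambda>J. if lam \<le> (Yr z D J)^2 then 1 else 0)"
proof -
  let ?s = "\<Sum>j\<in>D. (z j)^2"
  let ?I = "\<lambda>J. if lam \<le> (Yr z D J)^2 then 1 else (0::real)"
  define P where "P = Ew (1/2) D ?I"
  define c where "c = 3 * ?s^2 / (?s - lam)"
  have sp: "?s > 0" using assms by linarith
  have cpos: "c > 0" unfolding c_def using sp assms by simp
  have pt: "(Yr z D J)^2 \<le> lam + ((Yr z D J)^4 / (2 * c) + (c / 2) * ?I J)" for J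
  proof (cases "lam \<le> (Yr z D J)^2")
    case True
    have "0 \<le> ((Yr z D J)^2 - c)^2" by simp
    then have "2 * c * (Yr z D J)^2 \<le> (Yr z D J)^4 + c^2"
      by (simp add: power2_eq_square power4_eq_xxxx algebra_simps)
    then have "(Yr z D J)^2 \<le> (Yr z D J)^4 / (2 * c) + c / 2"
      using cpos by (simp add: field_simps power2_eq_square)
    then show ?thesis using True assms(2) by simp
  next
    case False
    have "0 \<le> (Yr z D J)^4 / (2 * c)" using cpos by simp
    then show ?thesis using False by simp
  qed
  have "?s \<le> Ew (1/2) D (\<lambda>J. lam + ((Yr z D J)^4 / (2 * c) + (c / 2) * ?I J))"
    using Ew_mono[of "1/2" D "\<lambda>J. (Yr z D J)^2", OF _ _ pt] rad2[OF assms(1)] by simp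
  also have "\<dots> = lam + (Ew (1/2) D (\<lambda>J. (Yr z D J)^4) / (2 * c) + (c / 2) * P)"
    using Ew_add[of "1/2" D "\<lambda>J. lam" "\<lambda>J. (Yr z D J)^4 / (2 * c) + (c / 2) * ?I J"]
      Ew_add[of "1/2" D "\<lambda>J. (Yr z D J)^4 / (2 * c)" "\<lambda>J. (c / 2) * ?I J"]
      Ew_cmult[of "1/2" D "1 / (2 * c)" "\<lambda>J. (Yr z D J)^4"]
      Ew_cmult[of "1/2" D "c / 2" ?I] Ew_const[OF assms(1)]
    unfolding P_def by simp
  also have "\<dots> \<le> lam + (3 * ?s^2 / (2 * c) + (c / 2) * P)"
    using rad4[OF assms(1), of z] cpos by (simp add: divide_right_mono)
  finally have h1: "?s - lam \<le> 3 * ?s^2 / (2 * c) + (c / 2) * P" by simp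
  have h2: "3 * ?s^2 / (2 * c) = (?s - lam) / 2" unfolding c_def using sp assms by (simp add: field_simps)
  define q where "q = (c / 2) * P"
  have aux: "\<And>(a::real) (l::real) (X::real) (q::real). a - l \<le> X + q \<Longrightarrow> X = (a - l) / 2 \<Longrightarrow> (a - l) / 2 \<le> q" by (simp add: field_simps)
  have "(?s - lam) / 2 \<le> (c / 2) * P" by (rule aux[OF h1 h2])
  then have "(?s - lam) / c \<le> P" using cpos by (simp add: field_simps)
  moreover have "(?s - lam) / c = (?s - lam)^2 / (3 * ?s^2)" unfolding c_def using sp assms
    by (simp add: field_simps power2_eq_square)
  ultimately show ?thesis unfolding P_def by simp
qed



definition gi :: "real \<Rightarrow> real \<Rightarrow> real" where
  "gi t x = (if t \<le> \<bar>x\<bar> then 1 else 0)"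

definition Gf :: "real \<Rightarrow> real \<Rightarrow> (nat \<Rightarrow> real) \<Rightarrow> nat set \<Rightarrow> nat set \<Rightarrow> real" where
  "Gf t u z D J = gi t (sum z J) + gi t (sum z (D - J)) + gi t (u + sum z J) + gi t (u + sum z (D - J))"

lemma G4_nonneg: "0 \<le> gi t A + gi t B + gi t (u + A) + gi t (u + B)"
  by (simp add: gi_def)

lemma G4_le: "gi t A + gi t B + gi t (u + A) + gi t (u + B) \<le> 4"
  by (simp add: gi_def)

lemma G4_u: "2 * t \<le> \<bar>u\<bar> \<Longrightarrow> 2 \<le> gi t A + gi t B + gi t (u + A) + gi t (u + B)"
  unfolding gi_def by (auto split: if_splits)

lemma G4_s: "\<bar>u\<bar> < 2 * t \<Longrightarrow> 12 * t \<le> \<bar>A + B\<bar> \<Longrightarrow> 2 \<le> gi t A + gi t B + gi t (u + A) + gi t (u + B)"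
  unfolding gi_def by (auto split: if_splits)

lemma G4_y: assumes "0 < t" "\<bar>u\<bar> < 2 * t" "\<bar>A + B\<bar> < 12 * t" "324 * t^2 \<le> (A - B)^2"
  shows "4 \<le> gi t A + gi t B + gi t (u + A) + gi t (u + B)"
proof -
  have "(18 * t)^2 \<le> (A - B)^2" using assms(4) by (simp add: power2_eq_square)
  then have "\<bar>18 * t\<bar> \<le> \<bar>A - B\<bar>" using abs_le_square_iff by blast
  then have "18 * t \<le> \<bar>A - B\<bar>" using assms(1) by simp
  then show ?thesis using assms(2,3) unfolding gi_def by (auto split: if_splits)
qed

lemma sum_split_sub: "finite D \<Longrightarrow> J \<subseteq> D \<Longrightarrow> sum z D = sum z J + sum z (D - J)"
  by (metis add.commute sum.subset_diff)

lemma Yr_eq: "finite D \<Longrightarrow> J \<subseteq> D \<Longrightarrow> Yr z D J = sum z J - sum z (D - J)"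
proof -
  assume f: "finite D" and J: "J \<subseteq> D"
  have "Yr z D J = (\<Sum>j\<in>J. z j) + (\<Sum>j\<in>D - J. - z j)"
    unfolding Yr_def using f J
    by (subst sum.subset_diff[OF J f]) (simp add: add.commute)
  then show ?thesis by (simp add: sum_negf)
qed

lemma Ew_nonneg: "0 \<le> p \<Longrightarrow> p \<le> 1 \<Longrightarrow> finite A \<Longrightarrow> (\<And>D. D \<subseteq> A \<Longrightarrow> 0 \<le> F D) \<Longrightarrow> 0 \<le> Ew p A F"
  using Ew_mono[of p A "\<lambda>D. 0" F] Ew_const[of A p 0] by simp

lemma Ew_lower: "0 \<le> p \<Longrightarrow> p \<le> 1 \<Longrightarrow> finite A \<Longrightarrow> (\<And>D. D \<subseteq> A \<Longrightarrow> c \<le> F D) \<Longrightarrow> c \<le> Ew p A F"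
  using Ew_mono[of p A "\<lambda>D. c" F] Ew_const[of A p c] by simp



lemma inner_u:
  assumes "finite D" "2 * t \<le> \<bar>u\<bar>"
  shows "2 \<le> Ew (1/2) D (Gf t u z D)"
  by (rule Ew_lower) (use assms in \<open>auto simp: Gf_def intro: G4_u\<close>)

lemma inner_s:
  assumes "finite D" "\<bar>u\<bar> < 2 * t" "12 * t \<le> \<bar>sum z D\<bar>"
  shows "2 \<le> Ew (1/2) D (Gf t u z D)"
proof (rule Ew_lower)
  fix J assume J: "J \<subseteq> D"
  have "12 * t \<le> \<bar>sum z J + sum z (D - J)\<bar>" using assms(3) sum_split_sub[OF assms(1) J, of z] by simp
  then show "2 \<le> Gf t u z D J" unfolding Gf_def by (rule G4_s[OF assms(2)])
qed (use assms in auto)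

lemma inner_nonneg: "finite D \<Longrightarrow> 0 \<le> Ew (1/2) D (Gf t u z D)"
  by (rule Ew_nonneg) (auto simp: Gf_def intro: G4_nonneg)

lemma inner_le4: "finite D \<Longrightarrow> Ew (1/2) D (Gf t u z D) \<le> 4"
  using Ew_mono[of "1/2" D "Gf t u z D" "\<lambda>J. 4"] Ew_const[of D "1/2" 4]
  by (simp add: Gf_def G4_le)

lemma inner_y:
  assumes "finite D" "0 < t" "\<bar>u\<bar> < 2 * t" "\<bar>sum z D\<bar> < 12 * t" "324000 * t^2 \<le> (\<Sum>j\<in>D. (z j)^2)"
  shows "133/100 \<le> Ew (1/2) D (Gf t u z D)"
proof -
  let ?s = "\<Sum>j\<in>D. (z j)^2"
  let ?l = "324 * t^2"
  let ?I = "\<lambda>J. if ?l \<le> (Yr z D J)^2 then 1 else (0::real)"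
  have lpos: "0 < ?l" using assms(2) by simp
  have ls: "?l < ?s" using assms(5) lpos by linarith
  have pt: "4 * ?I J \<le> Gf t u z D J" if J: "J \<subseteq> D" for J
  proof (cases "?l \<le> (Yr z D J)^2")
    case True
    then have "324 * t^2 \<le> (sum z J - sum z (D - J))^2" using Yr_eq[OF assms(1) J] by simp
    moreover have "\<bar>sum z J + sum z (D - J)\<bar> < 12 * t" using assms(4) sum_split_sub[OF assms(1) J, of z] by simp
    ultimately have "4 \<le> Gf t u z D J" unfolding Gf_def using G4_y[OF assms(2,3)] by blast
    then show ?thesis using True by simp
  next
    case False
    then show ?thesis unfolding Gf_def using G4_nonneg by simp
  qed
  have "4 * Ew (1/2) D ?I \<le> Ew (1/2) D (Gf t u z D)"
    using Ew_mono[of "1/2" D "\<lambda>J. 4 * ?I J" "Gf t u z D", OF _ _ pt] Ew_cmult[of "1/2" D 4 ?I] by simp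
  moreover have "(?s - ?l)^2 / (3 * ?s^2) \<le> Ew (1/2) D ?I" by (rule PZ[OF assms(1) lpos ls])
  moreover have "133/400 \<le> (?s - ?l)^2 / (3 * ?s^2)"
  proof -
    have sp: "0 < ?s" using ls lpos by linarith
    have "999/1000 * ?s \<le> ?s - ?l" using assms(5) by simp
    then have "(999/1000 * ?s)^2 \<le> (?s - ?l)^2" using sp by (intro power_mono) auto
    then have h: "998001/1000000 * ?s^2 \<le> (?s - ?l)^2" by (simp add: power2_eq_square)
    have aux: "\<And>(X::real) (Y::real). 998001/1000000 * X \<le> Y \<Longrightarrow> 0 \<le> X \<Longrightarrow> 399 * X \<le> 400 * Y" by simp
    have "399 * ?s^2 \<le> 400 * (?s - ?l)^2" by (rule aux[OF h]) simp
    then show ?thesis using sp by (simp add: field_simps)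
  qed
  ultimately show ?thesis by linarith
qed



lemma Ew_ind_ge:
  assumes "0 \<le> p" "p \<le> 1" "finite A" "Ew p A (\<lambda>D. if Q D then 1 else 0) \<le> e"
    "\<And>D. D \<subseteq> A \<Longrightarrow> \<not> Q D \<Longrightarrow> P D"
  shows "1 - e \<le> Ew p A (\<lambda>D. if P D then 1 else 0)"
proof -
  have "Ew p A (\<lambda>D. 1 - (if Q D then 1 else 0)) \<le> Ew p A (\<lambda>D. if P D then 1 else 0)"
    by (rule Ew_mono) (use assms in auto)
  moreover have "Ew p A (\<lambda>D. 1 - (if Q D then 1 else 0)) = 1 - Ew p A (\<lambda>D. if Q D then 1 else 0)"
    using Ew_diff[of p A "\<lambda>D. 1" "\<lambda>D. if Q D then 1 else 0"] Ew_one[OF assms(3)] by simp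
  ultimately show ?thesis using assms(4) by linarith
qed

lemma ev_mean:
  assumes fin: "finite A" and p: "0 < p" "p \<le> 1/2" and tp: "0 < t" "48 * t \<le> p * a"
    and S: "a / 2 \<le> \<bar>sum z A\<bar>" and Q: "(\<Sum>j\<in>A. (z j)^2) \<le> p * (sum z A)^2 / 80"
  shows "19/20 \<le> Ew p A (\<lambda>D. if 12 * t \<le> \<bar>sum z D\<bar> then 1 else 0)"
proof -
  let ?S = "sum z A" let ?Q = "\<Sum>j\<in>A. (z j)^2"
  have apos: "0 < a" using tp p zero_less_mult_pos[of p a] by linarith
  have Spos: "0 < \<bar>?S\<bar>" using S apos by linarith
  have tt: "0 < p * \<bar>?S\<bar> / 2" using p Spos by simp
  have "Ew p A (\<lambda>D. if p * \<bar>?S\<bar> / 2 \<le> \<bar>sum z D - p * ?S\<bar> then 1 else 0)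
      \<le> Ew p A (\<lambda>D. (sum z D - p * ?S)^2) / (p * \<bar>?S\<bar> / 2)^2"
    by (rule Ew_cheb) (use p tt in auto)
  also have "\<dots> = p * (1 - p) * ?Q / (p * \<bar>?S\<bar> / 2)^2" using Ew_var[OF fin, of p z] by simp
  also have "\<dots> \<le> p * ?Q / (p * \<bar>?S\<bar> / 2)^2"
    using p by (intro divide_right_mono mult_right_mono) (auto intro: sum_nonneg)
  also have "\<dots> = 4 * ?Q / (p * ?S^2)" using p Spos by (simp add: field_simps power2_eq_square)
  also have "\<dots> \<le> 4 * (p * ?S^2 / 80) / (p * ?S^2)"
    using p Spos Q by (intro divide_right_mono) auto
  also have "\<dots> = 1/20" using p Spos by (simp add: field_simps)
  finally have c: "Ew p A (\<lambda>D. if p * \<bar>?S\<bar> / 2 \<le> \<bar>sum z D - p * ?S\<bar> then 1 else 0) \<le> 1/20" .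
  have "1 - 1/20 \<le> Ew p A (\<lambda>D. if 12 * t \<le> \<bar>sum z D\<bar> then 1 else 0)"
  proof (rule Ew_ind_ge[OF _ _ fin c])
    fix D assume "\<not> p * \<bar>?S\<bar> / 2 \<le> \<bar>sum z D - p * ?S\<bar>"
    moreover have e1: "\<bar>p * ?S\<bar> = p * \<bar>?S\<bar>" using p by (simp add: abs_mult)
    moreover have e2: "\<bar>p * ?S\<bar> \<le> \<bar>sum z D\<bar> + \<bar>sum z D - p * ?S\<bar>" by arith
    ultimately have "p * \<bar>?S\<bar> / 2 \<le> \<bar>sum z D\<bar>" by linarith
    moreover have "p * (a / 2) \<le> p * \<bar>?S\<bar>" using S p by simp
    ultimately show "12 * t \<le> \<bar>sum z D\<bar>" using tp by linarith
  qed (use p in auto)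
  then show ?thesis by simp
qed

lemma ev_var:
  assumes fin: "finite A" and p: "0 < p" "p \<le> 1/2" and tp: "0 < t" "14400 * t \<le> p * a"
    and S: "a / 2 \<le> \<bar>sum z A\<bar>" and Q: "p * (sum z A)^2 / 80 < (\<Sum>j\<in>A. (z j)^2)"
    and small: "\<And>j. j \<in> A \<Longrightarrow> (z j)^2 \<le> p^2 * a^2 / 25600"
  shows "19/20 \<le> Ew p A (\<lambda>D. if 324000 * t^2 \<le> (\<Sum>j\<in>D. (z j)^2) then 1 else 0)"
proof -
  let ?S = "sum z A" let ?Q = "\<Sum>j\<in>A. (z j)^2" let ?c = "p^2 * a^2 / 25600"
  have apos: "0 < a" using tp p zero_less_mult_pos[of p a] by linarith
  have S2: "a^2 / 4 \<le> ?S^2"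
  proof -
    have "(a/2)^2 \<le> \<bar>?S\<bar>^2" using S apos by (intro power_mono) auto
    then show ?thesis by (simp add: power2_eq_square)
  qed
  have pQ: "p^2 * a^2 / 320 < p * ?Q"
  proof -
    have "p * (a^2/4) / 80 \<le> p * ?S^2 / 80" using S2 p by (intro divide_right_mono mult_left_mono) auto
    then have "p * (a^2/4) / 80 < ?Q" using Q by linarith
    then have "p * (p * (a^2/4) / 80) < p * ?Q" using p by simp
    then show ?thesis by (simp add: power2_eq_square field_simps)
  qed
  have Qpos: "0 < ?Q" using pQ p by (smt (verit) mult_nonneg_nonneg zero_le_power2 divide_nonneg_pos zero_less_mult_pos)
  have tt: "0 < p * ?Q / 2" using p Qpos by simp
  have z4: "(\<Sum>j\<in>A. ((z j)^2)^2) \<le> ?c * ?Q"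
  proof -
    have "(\<Sum>j\<in>A. ((z j)^2)^2) \<le> (\<Sum>j\<in>A. ?c * (z j)^2)"
    proof (rule sum_mono)
      fix j assume "j \<in> A"
      then have "(z j)^2 \<le> ?c" by (rule small)
      then have "(z j)^2 * (z j)^2 \<le> ?c * (z j)^2" by (intro mult_right_mono) auto
      then show "((z j)^2)^2 \<le> ?c * (z j)^2" by (simp add: power2_eq_square)
    qed
    then show ?thesis by (simp add: sum_distrib_left)
  qed
  have "Ew p A (\<lambda>D. if p * ?Q / 2 \<le> \<bar>(\<Sum>j\<in>D. (z j)^2) - p * ?Q\<bar> then 1 else 0)
      \<le> Ew p A (\<lambda>D. ((\<Sum>j\<in>D. (z j)^2) - p * ?Q)^2) / (p * ?Q / 2)^2"
    by (rule Ew_cheb) (use p tt in auto)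
  also have "\<dots> = p * (1 - p) * (\<Sum>j\<in>A. ((z j)^2)^2) / (p * ?Q / 2)^2"
    using Ew_var[OF fin, of p "\<lambda>j. (z j)^2"] by simp
  also have "\<dots> \<le> p * (?c * ?Q) / (p * ?Q / 2)^2"
  proof (intro divide_right_mono)
    have "p * (1 - p) * (\<Sum>j\<in>A. ((z j)^2)^2) \<le> p * (\<Sum>j\<in>A. ((z j)^2)^2)"
      using p by (intro mult_right_mono) (auto intro: sum_nonneg)
    also have "\<dots> \<le> p * (?c * ?Q)" using z4 p by (intro mult_left_mono) auto
    finally show "p * (1 - p) * (\<Sum>j\<in>A. ((z j)^2)^2) \<le> p * (?c * ?Q)" .
  qed simp
  also have "\<dots> = 4 * ?c / (p * ?Q)" using p Qpos by (simp add: field_simps power2_eq_square)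
  also have "\<dots> \<le> 1/20"
  proof -
    have "80 * ?c = p^2 * a^2 / 320" by simp
    then have "80 * ?c \<le> p * ?Q" using pQ by linarith
    then show ?thesis using p Qpos by (simp add: field_simps)
  qed
  finally have c: "Ew p A (\<lambda>D. if p * ?Q / 2 \<le> \<bar>(\<Sum>j\<in>D. (z j)^2) - p * ?Q\<bar> then 1 else 0) \<le> 1/20" .
  have "1 - 1/20 \<le> Ew p A (\<lambda>D. if 324000 * t^2 \<le> (\<Sum>j\<in>D. (z j)^2) then 1 else 0)"
  proof (rule Ew_ind_ge[OF _ _ fin c])
    fix D assume "\<not> p * ?Q / 2 \<le> \<bar>(\<Sum>j\<in>D. (z j)^2) - p * ?Q\<bar>"
    then have h1: "p * ?Q / 2 \<le> (\<Sum>j\<in>D. (z j)^2)" by linarith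
    have "t^2 \<le> (p * a / 14400)^2" using tp by (intro power_mono) auto
    then have "324000 * t^2 \<le> p^2 * a^2 / 640" by (simp add: power2_eq_square algebra_simps)
    then show "324000 * t^2 \<le> (\<Sum>j\<in>D. (z j)^2)" using h1 pQ by linarith
  qed (use p in auto)
  then show ?thesis by simp
qed



lemma row_bound:
  fixes z :: "nat \<Rightarrow> real" and ok :: "nat set \<Rightarrow> bool"
  assumes fin: "finite A" and p: "0 < p" "p \<le> 1/2"
    and tp: "0 < t" "48 * t \<le> p * a" "14400 * t \<le> p * a"
    and rs: "a \<le> \<bar>u + sum z A\<bar>"
    and small: "\<And>j. j \<in> A \<Longrightarrow> (z j)^2 \<le> p^2 * a^2 / 25600"
    and okp: "Ew p A (\<lambda>D. if ok D then 0 else 1) \<le> 3/100"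
  shows "1 \<le> Ew p A (\<lambda>D. if ok D then Ew (1/2) D (Gf t u z D) else 0)"
proof -
  let ?bad = "\<lambda>D. if ok D then 0 else (1::real)"
  let ?F = "\<lambda>D. if ok D then Ew (1/2) D (Gf t u z D) else 0"
  have p1: "0 \<le> p" "p \<le> 1" using p by auto
  have fD: "\<And>D. D \<subseteq> A \<Longrightarrow> finite D" using fin finite_subset by blast
  have apos: "0 < a" using tp p zero_less_mult_pos[of p a] by linarith
  show ?thesis
  proof (cases "2 * t \<le> \<bar>u\<bar>")
    case True
    have "Ew p A (\<lambda>D. 2 - 2 * ?bad D) \<le> Ew p A ?F"
    proof (rule Ew_mono[OF p1])
      fix D assume D: "D \<subseteq> A"
      show "2 - 2 * ?bad D \<le> ?F D" using inner_u[OF fD[OF D] True, of z] by auto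
    qed
    moreover have "Ew p A (\<lambda>D. 2 - 2 * ?bad D) = 2 - 2 * Ew p A ?bad"
      using Ew_diff[of p A "\<lambda>D. 2" "\<lambda>D. 2 * ?bad D"] Ew_cmult[of p A 2 ?bad] Ew_const[OF fin, of p 2]
      by simp
    ultimately show ?thesis using okp by linarith
  next
    case False
    then have u: "\<bar>u\<bar> < 2 * t" by simp
    let ?ev = "\<lambda>D. 12 * t \<le> \<bar>sum z D\<bar> \<or> 324000 * t^2 \<le> (\<Sum>j\<in>D. (z j)^2)"
    let ?evi = "\<lambda>D. if ?ev D then 1 else (0::real)"
    have "Ew p A (\<lambda>D. (133/100) * ?evi D - (133/100) * ?bad D) \<le> Ew p A ?F"
    proof (rule Ew_mono[OF p1])
      fix D assume D: "D \<subseteq> A"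
      have i0: "0 \<le> Ew (1/2) D (Gf t u z D)" by (rule inner_nonneg[OF fD[OF D]])
      have i1: "?ev D \<Longrightarrow> 133/100 \<le> Ew (1/2) D (Gf t u z D)"
      proof -
        assume ev: "?ev D"
        show ?thesis
        proof (cases "12 * t \<le> \<bar>sum z D\<bar>")
          case True
          then show ?thesis using inner_s[OF fD[OF D] u True] by linarith
        next
          case False
          then have "\<bar>sum z D\<bar> < 12 * t" "324000 * t^2 \<le> (\<Sum>j\<in>D. (z j)^2)" using ev by auto
          then show ?thesis by (rule inner_y[OF fD[OF D] tp(1) u])
        qed
      qed
      show "(133/100) * ?evi D - (133/100) * ?bad D \<le> ?F D"
        using i0 i1 by auto
    qed
    moreover have "Ew p A (\<lambda>D. (133/100) * ?evi D - (133/100) * ?bad D) = (133/100) * Ew p A ?evi - (133/100) * Ew p A ?bad"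
      using Ew_diff[of p A "\<lambda>D. (133/100) * ?evi D" "\<lambda>D. (133/100) * ?bad D"] Ew_cmult[of p A "133/100" ?bad]
        Ew_cmult[of p A "133/100" ?evi] by simp
    moreover have "19/20 \<le> Ew p A ?evi"
    proof -
      have pa: "p * a \<le> (1/2) * a" using p apos by (intro mult_right_mono) auto
      have tri: "\<bar>u + sum z A\<bar> \<le> \<bar>u\<bar> + \<bar>sum z A\<bar>" by (rule abs_triangle_ineq)
      have S: "a / 2 \<le> \<bar>sum z A\<bar>" using rs u tp pa tri by linarith
      show ?thesis
      proof (cases "(\<Sum>j\<in>A. (z j)^2) \<le> p * (sum z A)^2 / 80")
        case True
        have "Ew p A (\<lambda>D. if 12 * t \<le> \<bar>sum z D\<bar> then 1 else 0) \<le> Ew p A ?evi"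
          by (rule Ew_mono[OF p1]) auto
        then show ?thesis using ev_mean[OF fin p tp(1,2) S True] by linarith
      next
        case False
        then have Q: "p * (sum z A)^2 / 80 < (\<Sum>j\<in>A. (z j)^2)" by simp
        have "Ew p A (\<lambda>D. if 324000 * t^2 \<le> (\<Sum>j\<in>D. (z j)^2) then 1 else 0) \<le> Ew p A ?evi"
          by (rule Ew_mono[OF p1]) auto
        then show ?thesis using ev_var[OF fin p tp(1,3) S Q small] by linarith
      qed
    qed
    ultimately show ?thesis using okp by linarith
  qed
qed



lemma kth_nonneg:
  assumes "finite J" "\<And>l. l \<in> J \<Longrightarrow> 0 \<le> f l"
  shows "0 \<le> kth_largest r J f"
proof (cases "r = 0 \<or> r > card J")
  case True then show ?thesis by (simp add: kth_largest_def)
next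
  case False
  let ?ys = "rev (sort (map f (sorted_list_of_set J)))"
  have len: "length ?ys = card J" using assms(1) by simp
  have "r - 1 < length ?ys" using False len by linarith
  then have "?ys ! (r - 1) \<in> set ?ys" by (rule nth_mem)
  then have "?ys ! (r - 1) \<in> f ` J" using assms(1) by simp
  then show ?thesis using False assms(2) by (auto simp: kth_largest_def)
qed

lemma kth_count:
  assumes fin: "finite J" and r: "1 \<le> r" "r \<le> card {l\<in>J. t \<le> f l}"
  shows "t \<le> kth_largest r J f"
proof -
  let ?xs = "sorted_list_of_set J"
  let ?ys = "sort (map f ?xs)"
  define n where "n = card J"
  have lenys: "length ?ys = n" using fin unfolding n_def by simp
  have rn: "r \<le> n" unfolding n_def using r(2) card_mono[OF fin, of "{l\<in>J. t \<le> f l}"] by auto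
  have kth: "kth_largest r J f = ?ys ! (n - r)"
  proof -
    have "kth_largest r J f = rev ?ys ! (r - 1)" using r rn unfolding kth_largest_def n_def by auto
    also have "\<dots> = ?ys ! (length ?ys - Suc (r - 1))" using r rn lenys by (simp add: rev_nth)
    also have "\<dots> = ?ys ! (n - r)" using r lenys by (simp add: Suc_diff_le)
    finally show ?thesis .
  qed
  have cnt: "card {l\<in>J. t \<le> f l} = card {i. i < n \<and> t \<le> ?ys ! i}"
  proof -
    have "card {i. i < n \<and> t \<le> ?ys ! i} = length (filter (\<lambda>v. t \<le> v) ?ys)"
      using lenys by (simp add: length_filter_conv_card)
    also have "\<dots> = length (filter (\<lambda>v. t \<le> v) (map f ?xs))"
      by (simp only: filter_sort length_sort)
    also have "\<dots> = length (filter (\<lambda>l. t \<le> f l) ?xs)" by (simp add: filter_map o_def)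
    also have "\<dots> = card (set (filter (\<lambda>l. t \<le> f l) ?xs))"
      by (metis distinct_card distinct_filter distinct_sorted_list_of_set)
    also have "set (filter (\<lambda>l. t \<le> f l) ?xs) = {l\<in>J. t \<le> f l}" using fin by auto
    finally show ?thesis by simp
  qed
  show ?thesis
  proof (rule ccontr)
    assume "\<not> ?thesis"
    then have lt: "?ys ! (n - r) < t" using kth by simp
    have sorted: "sorted ?ys" by simp
    have "{i. i < n \<and> t \<le> ?ys ! i} \<subseteq> {n - r + 1..<n}"
    proof
      fix i assume i: "i \<in> {i. i < n \<and> t \<le> ?ys ! i}"
      show "i \<in> {n - r + 1..<n}"
      proof (rule ccontr)
        assume "i \<notin> {n - r + 1..<n}"
        then have "i \<le> n - r" using i by auto
        then have "?ys ! i \<le> ?ys ! (n - r)" using sorted rn r lenys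
          by (intro sorted_nth_mono) auto
        then show False using i lt by auto
      qed
    qed
    then have "card {i. i < n \<and> t \<le> ?ys ! i} \<le> card {n - r + 1..<n}" by (intro card_mono) auto
    also have "\<dots> = r - 1" using rn r by simp
    finally show False using cnt r by linarith
  qed
qed



lemma sum_ind_card: "finite S \<Longrightarrow> (\<Sum>l\<in>S. if P l then 1 else (0::real)) = real (card {l\<in>S. P l})"
  by (simp add: sum.inter_filter[symmetric])

lemma mv_proj:
  assumes "J \<subseteq> {..<k}"
  shows "mat_vec k T (coord_proj J y) l = (\<Sum>j\<in>J. T l j * y j)"
proof -
  have "mat_vec k T (coord_proj J y) l = (\<Sum>j\<in>{..<k}. T l j * (if j \<in> J then y j else 0))"
    by (simp add: mat_vec_def coord_proj_def)
  also have "\<dots> = (\<Sum>j\<in>J. T l j * (if j \<in> J then y j else 0))"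
    by (rule sum.mono_neutral_right) (use assms in auto)
  also have "\<dots> = (\<Sum>j\<in>J. T l j * y j)" by simp
  finally show ?thesis .
qed

lemma finish:
  fixes T :: "nat \<Rightarrow> nat \<Rightarrow> real"
  assumes J: "J \<subseteq> {..<k}" "real (card J) \<le> d" and m: "4 \<le> m"
    and cnt: "real m / 4 \<le> real (card {l\<in>{..<m}. t \<le> \<bar>\<Sum>j\<in>J. T l j * y j\<bar>})"
  shows "t \<le> kth_largest (m div 4) {..<m} (\<lambda>l. \<bar>mat_vec k T (coord_proj J y) l\<bar>)"
proof (rule kth_count)
  show "1 \<le> m div 4" using m by simp
  have "m div 4 \<le> card {l\<in>{..<m}. t \<le> \<bar>\<Sum>j\<in>J. T l j * y j\<bar>}"
  proof -
    have "real (m div 4) \<le> real m / 4" by linarith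
    then show ?thesis using cnt by linarith
  qed
  also have "{l\<in>{..<m}. t \<le> \<bar>\<Sum>j\<in>J. T l j * y j\<bar>} = {l\<in>{..<m}. t \<le> \<bar>mat_vec k T (coord_proj J y) l\<bar>}"
    using mv_proj[OF J(1)] by simp
  finally show "m div 4 \<le> card {l\<in>{..<m}. t \<le> \<bar>mat_vec k T (coord_proj J y) l\<bar>}" .
qed simp



lemma core:
  fixes \<delta> :: real and k m :: nat and T :: "nat \<Rightarrow> nat \<Rightarrow> real" and y :: "nat \<Rightarrow> real"
  assumes d: "0 < \<delta>" "\<delta> \<le> 1" and kk: "12 / \<delta>^2 \<le> real k" and m: "4 \<le> m"
    and y: "(\<Sum>j<k. (y j)^2) = 1"
  shows "\<exists>J. J \<subseteq> {..<k} \<and> real (card J) \<le> \<delta> * real k \<and>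
    (1 / 10^7) * \<delta>^2 * (MIN l\<in>{..<m}. \<bar>mat_vec k T y l\<bar>)
      \<le> (MAX (i, j)\<in>{..<m} \<times> {..<k}. \<bar>T i j\<bar>) / sqrt (real k)
         + kth_largest (m div 4) {..<m} (\<lambda>l. \<bar>mat_vec k T (coord_proj J y) l\<bar>)"
proof -
  define a where "a = (MIN l\<in>{..<m}. \<bar>mat_vec k T y l\<bar>)"
  define M where "M = (MAX (i, j)\<in>{..<m} \<times> {..<k}. \<bar>T i j\<bar>)"
  have d2: "\<delta>^2 \<le> 1" "0 < \<delta>^2" using d by (auto simp: power_le_one)
  have "12 \<le> 12 / \<delta>^2" using d2 by (simp add: field_simps)
  then have k12: "12 \<le> real k" using kk by linarith
  have dk: "12 \<le> \<delta> * real k"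
  proof -
    have "\<delta> * (12 / \<delta>^2) \<le> \<delta> * real k" by (rule mult_left_mono[OF kk]) (use d in simp)
    moreover have "\<delta> * (12 / \<delta>^2) = 12 / \<delta>" using d by (simp add: power2_eq_square)
    moreover have "12 \<le> 12 / \<delta>" using d by (simp add: field_simps)
    ultimately show ?thesis by linarith
  qed
  have kpos: "0 < k" using k12 by simp
  have mpos: "0 < m" using m by simp
  have Mge: "\<bar>T i j\<bar> \<le> M" if "i < m" "j < k" for i j
  proof -
    have "(\<lambda>(i, j). \<bar>T i j\<bar>) (i, j) \<in> (\<lambda>(i, j). \<bar>T i j\<bar>) ` ({..<m} \<times> {..<k})" using that by force
    then show ?thesis unfolding M_def by (intro Max_ge) auto
  qed
  have aLe: "a \<le> \<bar>mat_vec k T y l\<bar>" if "l < m" for l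
    unfolding a_def using that by (intro Min_le) auto
  have M0: "0 \<le> M" using Mge[OF mpos kpos] by linarith
  have a0: "0 \<le> a"
  proof -
    have "a \<in> (\<lambda>l. \<bar>mat_vec k T y l\<bar>) ` {..<m}" unfolding a_def using mpos by (intro Min_in) auto
    then show ?thesis by auto
  qed
  have kth0: "0 \<le> kth_largest (m div 4) {..<m} (\<lambda>l. \<bar>mat_vec k T (coord_proj J y) l\<bar>)" for J
    by (rule kth_nonneg) auto
  have sk: "0 < sqrt (real k)" using kpos by simp
  show ?thesis
  proof (cases "(1 / 10^7) * \<delta>^2 * a \<le> M / sqrt (real k)")
    case True
    show ?thesis
    proof (intro exI conjI)
      show "{} \<subseteq> {..<k}" by simp
      show "real (card {}) \<le> \<delta> * real k" using d by simp
      show "(1 / 10^7) * \<delta>^2 * (MIN l\<in>{..<m}. \<bar>mat_vec k T y l\<bar>)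
        \<le> (MAX (i, j)\<in>{..<m} \<times> {..<k}. \<bar>T i j\<bar>) / sqrt (real k)
           + kth_largest (m div 4) {..<m} (\<lambda>l. \<bar>mat_vec k T (coord_proj {} y) l\<bar>)"
        using True kth0[of "{}"] unfolding a_def[symmetric] M_def[symmetric] by linarith
    qed
  next
    case False
    then have nt: "M / sqrt (real k) < \<delta>^2 * a / 10^7" by simp
    define t where "t = \<delta>^2 * a / 10^7"
    have tpos: "0 < t" using nt M0 sk unfolding t_def
      by (smt (verit, best) divide_nonneg_pos)
    have apos: "0 < a" using tpos d2 unfolding t_def by (simp add: zero_less_mult_iff)
    have Mpos: "0 < M"
    proof (rule ccontr)
      assume "\<not> 0 < M"
      then have "M = 0" using M0 by simp
      then have "\<And>j. j < k \<Longrightarrow> T 0 j = 0" using Mge[OF mpos] by fastforce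
      then have "mat_vec k T y 0 = 0" by (simp add: mat_vec_def)
      then show False using aLe[OF mpos] apos by simp
    qed
    have Mt: "M^2 < t^2 * real k"
    proof -
      have "M < t * sqrt (real k)" using nt sk unfolding t_def by (simp add: field_simps)
      then have "M^2 < (t * sqrt (real k))^2" using M0 by (intro power_strict_mono) auto
      then show ?thesis by (simp add: power_mult_distrib)
    qed
    define p where "p = \<delta> / 16"
    define c0 where "c0 = p^2 * a^2 / (25600 * M^2)"
    define L where "L = {j\<in>{..<k}. c0 < (y j)^2}"
    define Aset where "Aset = {j\<in>{..<k}. (y j)^2 \<le> c0}"
    define ok where "ok D = (real (card D) \<le> \<delta> * real k / 2)" for D :: "nat set"
    have pp: "0 < p" "p \<le> 1/2" using d unfolding p_def by auto
    have c0pos: "0 < c0" using pp apos Mpos unfolding c0_def by simp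
    have finL: "finite L" and finA: "finite Aset" unfolding L_def Aset_def by auto
    have LAd: "L \<inter> Aset = {}" and LAu: "L \<union> Aset = {..<k}" unfolding L_def Aset_def by auto
    have cardL: "real (card L) \<le> \<delta> * real k / 2"
    proof -
      have "real (card L) * c0 = (\<Sum>j\<in>L. c0)" by simp
      also have "\<dots> \<le> (\<Sum>j\<in>L. (y j)^2)" by (rule sum_mono) (auto simp: L_def)
      also have "\<dots> \<le> (\<Sum>j<k. (y j)^2)" by (rule sum_mono2) (auto simp: L_def)
      finally have h: "real (card L) * c0 \<le> 1" using y by simp
      have h2: "real (card L) * (p^2 * a^2) \<le> 25600 * M^2"
        using h Mpos unfolding c0_def by (simp add: field_simps)
      have h3: "real (card L) * (\<delta>^2 * a^2) < (6553600 * \<delta>^2 * real k / 10^14) * (\<delta>^2 * a^2)"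
      proof -
        have "real (card L) * (\<delta>^2 * a^2) = 256 * (real (card L) * (p^2 * a^2))"
          unfolding p_def by (simp add: power2_eq_square field_simps)
        also have "\<dots> \<le> 256 * (25600 * M^2)" by (rule mult_left_mono[OF h2]) simp
        also have "\<dots> < 256 * (25600 * (t^2 * real k))" using Mt by simp
        also have "\<dots> = (6553600 * \<delta>^2 * real k / 10^14) * (\<delta>^2 * a^2)"
          unfolding t_def by (simp add: power2_eq_square field_simps)
        finally show ?thesis .
      qed
      have "real (card L) < 6553600 * \<delta>^2 * real k / 10^14"
        by (rule mult_right_less_imp_less[OF h3]) simp
      also have "\<dots> \<le> \<delta> * real k / 2"
      proof -
        have "\<delta>^2 \<le> \<delta>" using d by (simp add: power2_eq_square mult_left_le_one_le)
        then have A: "\<delta>^2 * real k \<le> \<delta> * real k" by (simp add: mult_right_mono)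
        have B: "0 \<le> \<delta> * real k" using d by simp
        have aux: "\<And>(X::real) (Y::real). X \<le> Y \<Longrightarrow> 0 \<le> Y \<Longrightarrow> 6553600 * X / 10^14 \<le> Y / 2" by simp
        have "6553600 * (\<delta>^2 * real k) / 10^14 \<le> \<delta> * real k / 2" by (rule aux[OF A B])
        then show ?thesis by (simp add: mult.assoc)
      qed
      finally show ?thesis by simp
    qed
    have okp: "Ew p Aset (\<lambda>D. if ok D then 0 else 1) \<le> 3/100"
    proof -
      let ?g = "\<lambda>D. (\<Sum>j\<in>D. (1::real))"
      let ?c = "p * (\<Sum>j\<in>Aset. (1::real))"
      let ?w = "7 * \<delta> * real k / 16"
      have wpos: "0 < ?w" using d kpos by simp
      have cA: "card Aset \<le> k"
      proof -
        have "card Aset \<le> card {..<k}" unfolding Aset_def by (rule card_mono) auto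
        then show ?thesis by simp
      qed
      have cle: "?c \<le> \<delta> * real k / 16"
      proof -
        have "?c = p * real (card Aset)" by simp
        also have "\<dots> \<le> p * real k" using cA pp by (intro mult_left_mono) auto
        finally show ?thesis unfolding p_def by simp
      qed
      have c0': "0 \<le> ?c" using pp by simp
      have "Ew p Aset (\<lambda>D. if ok D then 0 else 1) \<le> Ew p Aset (\<lambda>D. if ?w \<le> \<bar>?g D - ?c\<bar> then 1 else 0)"
      proof (rule Ew_mono)
        fix D assume "D \<subseteq> Aset"
        show "(if ok D then 0 else 1) \<le> (if ?w \<le> \<bar>?g D - ?c\<bar> then 1 else (0::real))"
        proof (cases "ok D")
          case False
          then have "\<delta> * real k / 2 < real (card D)" unfolding ok_def by simp
          then have "?w \<le> \<bar>?g D - ?c\<bar>" using cle by simp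
          then show ?thesis by simp
        qed simp
      qed (use pp in auto)
      also have "\<dots> \<le> Ew p Aset (\<lambda>D. (?g D - ?c)^2) / ?w^2"
        by (rule Ew_cheb) (use pp wpos in auto)
      also have "\<dots> = p * (1 - p) * real (card Aset) / ?w^2"
        using Ew_var[OF finA, of p "\<lambda>j. 1"] by simp
      also have "\<dots> \<le> (\<delta> * real k / 16) / ?w^2"
      proof (rule divide_right_mono)
        have "p * (1 - p) * real (card Aset) \<le> p * real (card Aset)"
          using pp by (intro mult_right_mono) auto
        also have "\<dots> \<le> \<delta> * real k / 16" using cle by simp
        finally show "p * (1 - p) * real (card Aset) \<le> \<delta> * real k / 16" .
      qed simp
      also have "\<dots> = 16 / (49 * (\<delta> * real k))" using d kpos by (simp add: power2_eq_square field_simps)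
      also have "\<dots> \<le> 16 / (49 * 12)" using dk by (intro divide_left_mono) auto
      also have "\<dots> \<le> 3/100" by simp
      finally show ?thesis .
    qed
    define z where "z l = (\<lambda>j. T l j * y j)" for l
    define u where "u l = (\<Sum>j\<in>L. z l j)" for l
    have tp: "48 * t \<le> p * a" "14400 * t \<le> p * a"
    proof -
      have dd: "\<delta>^2 \<le> \<delta>" using d by (simp add: power2_eq_square mult_left_le_one_le)
      have e: "14400 * t = (\<delta>^2 * a) * (14400 / 10^7)" unfolding t_def by simp
      also have "\<dots> \<le> (\<delta> * a) * (14400 / 10^7)" using dd apos by (intro mult_right_mono) auto
      also have "\<dots> \<le> p * a" unfolding p_def using d apos by simp
      finally show "14400 * t \<le> p * a" .
      then show "48 * t \<le> p * a" using tpos by linarith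
    qed
    have rowb: "1 \<le> Ew p Aset (\<lambda>D. if ok D then Ew (1/2) D (Gf t (u l) (z l) D) else 0)"
      if l: "l < m" for l
    proof (rule row_bound[OF finA pp tpos tp _ _ okp])
      have "u l + sum (z l) Aset = sum (z l) (L \<union> Aset)"
        unfolding u_def by (rule sum.union_disjoint[symmetric]) (use finL finA LAd in auto)
      also have "\<dots> = mat_vec k T y l" unfolding LAu z_def mat_vec_def by simp
      finally show "a \<le> \<bar>u l + sum (z l) Aset\<bar>" using aLe[OF l] by simp
    next
      fix j assume j: "j \<in> Aset"
      have "(T l j)^2 \<le> M^2"
      proof -
        have "\<bar>T l j\<bar>^2 \<le> M^2" using Mge[OF l] j unfolding Aset_def by (intro power_mono) auto
        then show ?thesis by simp
      qed
      moreover have "(y j)^2 \<le> c0" using j unfolding Aset_def by simp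
      ultimately have "(T l j)^2 * (y j)^2 \<le> M^2 * c0" by (intro mult_mono) auto
      also have "M^2 * c0 = p^2 * a^2 / 25600" unfolding c0_def using Mpos by simp
      finally show "(z l j)^2 \<le> p^2 * a^2 / 25600" unfolding z_def by (simp add: power_mult_distrib)
    qed
    let ?G = "\<lambda>D J. \<Sum>l<m. Gf t (u l) (z l) D J"
    have tot: "real m \<le> Ew p Aset (\<lambda>D. if ok D then Ew (1/2) D (?G D) else 0)"
    proof -
      have "real m = (\<Sum>l<m. (1::real))" by simp
      also have "\<dots> \<le> (\<Sum>l<m. Ew p Aset (\<lambda>D. if ok D then Ew (1/2) D (Gf t (u l) (z l) D) else 0))"
        by (rule sum_mono) (use rowb in auto)
      also have "\<dots> = Ew p Aset (\<lambda>D. \<Sum>l<m. if ok D then Ew (1/2) D (Gf t (u l) (z l) D) else 0)"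
        by (rule Ew_sum[symmetric])
      also have "\<dots> = Ew p Aset (\<lambda>D. if ok D then Ew (1/2) D (?G D) else 0)"
      proof (rule Ew_cong)
        fix D
        show "(\<Sum>l<m. if ok D then Ew (1/2) D (Gf t (u l) (z l) D) else 0) = (if ok D then Ew (1/2) D (?G D) else 0)"
          using Ew_sum[of "1/2" D "\<lambda>l J. Gf t (u l) (z l) D J" "{..<m}"] by simp
      qed
      finally show ?thesis .
    qed
    obtain D where D: "D \<subseteq> Aset" "real m \<le> (if ok D then Ew (1/2) D (?G D) else 0)"
      using Ew_exists[OF finA _ _ tot] pp by auto
    have okD: "ok D" using D(2) mpos by (cases "ok D") auto
    have finD: "finite D" using D(1) finA finite_subset by blast
    obtain J0 where J0: "J0 \<subseteq> D" "real m \<le> ?G D J0"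
      using Ew_exists[OF finD _ _, of "1/2" "real m" "?G D"] D(2) okD by auto
    have cardD: "real (card D) \<le> \<delta> * real k / 2" using okD unfolding ok_def .
    have Dk: "D \<subseteq> {..<k}" using D(1) unfolding Aset_def by auto
    have Lk: "L \<subseteq> {..<k}" unfolding L_def by auto
    have LD: "L \<inter> D = {}" using D(1) LAd by auto
    have fin_case: "?thesis" if J: "J \<subseteq> {..<k}" "real (card J) \<le> \<delta> * real k"
      and c: "real m / 4 \<le> real (card {l\<in>{..<m}. t \<le> \<bar>\<Sum>j\<in>J. T l j * y j\<bar>})" for J
    proof (intro exI conjI)
      show "J \<subseteq> {..<k}" "real (card J) \<le> \<delta> * real k" using J by auto
      have kt: "t \<le> kth_largest (m div 4) {..<m} (\<lambda>l. \<bar>mat_vec k T (coord_proj J y) l\<bar>)"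
        by (rule finish[OF J m c])
      have "0 \<le> M / sqrt (real k)" using M0 sk by simp
      moreover have "(1 / 10^7) * \<delta>^2 * (MIN l\<in>{..<m}. \<bar>mat_vec k T y l\<bar>) = t"
        unfolding t_def a_def by simp
      ultimately show "(1 / 10^7) * \<delta>^2 * (MIN l\<in>{..<m}. \<bar>mat_vec k T y l\<bar>)
        \<le> (MAX (i, j)\<in>{..<m} \<times> {..<k}. \<bar>T i j\<bar>) / sqrt (real k)
           + kth_largest (m div 4) {..<m} (\<lambda>l. \<bar>mat_vec k T (coord_proj J y) l\<bar>)"
        using kt unfolding M_def[symmetric] by linarith
    qed
    define cnt where "cnt x = real (card {l\<in>{..<m}. t \<le> \<bar>x l\<bar>})" for x :: "nat \<Rightarrow> real"
    have Gsum: "?G D J0 = cnt (\<lambda>l. sum (z l) J0) + cnt (\<lambda>l. sum (z l) (D - J0))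
        + cnt (\<lambda>l. u l + sum (z l) J0) + cnt (\<lambda>l. u l + sum (z l) (D - J0))"
      unfolding Gf_def gi_def cnt_def by (simp add: sum.distrib sum_ind_card)
    have sJ: "(\<Sum>j\<in>J. T l j * y j) = sum (z l) J" for J l unfolding z_def by simp
    have sLJ: "(\<Sum>j\<in>L \<union> J. T l j * y j) = u l + sum (z l) J" if "J \<subseteq> D" for J l
      unfolding sJ u_def by (rule sum.union_disjoint) (use finL finD that LD finite_subset in auto)
    have cJ0: "real (card J0) \<le> \<delta> * real k / 2"
      using card_mono[OF finD J0(1)] cardD by linarith
    have cDJ0: "real (card (D - J0)) \<le> \<delta> * real k / 2"
      using card_mono[OF finD, of "D - J0"] cardD by auto
    have cL1: "real (card (L \<union> J0)) \<le> \<delta> * real k"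
      using card_Un_le[of L J0] cJ0 cardL by linarith
    have cL2: "real (card (L \<union> (D - J0))) \<le> \<delta> * real k"
      using card_Un_le[of L "D - J0"] cDJ0 cardL by linarith
    have J0k: "J0 \<subseteq> {..<k}" using J0(1) Dk by auto
    have DJk: "D - J0 \<subseteq> {..<k}" using Dk by auto
    have dk0: "0 \<le> \<delta> * real k" using d by simp
    consider "real m / 4 \<le> cnt (\<lambda>l. sum (z l) J0)" | "real m / 4 \<le> cnt (\<lambda>l. sum (z l) (D - J0))"
      | "real m / 4 \<le> cnt (\<lambda>l. u l + sum (z l) J0)" | "real m / 4 \<le> cnt (\<lambda>l. u l + sum (z l) (D - J0))"
      using J0(2) Gsum by linarith
    then show ?thesis
    proof cases
      case 1 then show ?thesis using fin_case[OF J0k] cJ0 dk0 unfolding cnt_def sJ by simp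
    next
      case 2 then show ?thesis using fin_case[OF DJk] cDJ0 dk0 unfolding cnt_def sJ by simp
    next
      case 3 then show ?thesis using fin_case[of "L \<union> J0"] J0k Lk cL1 sLJ[OF J0(1)] unfolding cnt_def by simp
    next
      case 4 then show ?thesis using fin_case[of "L \<union> (D - J0)"] DJk Lk cL2 sLJ[of "D - J0"] unfolding cnt_def by simp
    qed
  qed
qed


theorem lemma4p1:
  shows "\<exists>C::real. C > 0 \<and>
    (\<forall>(\<delta>::real) (k::nat) (m::nat) (T::nat \<Rightarrow> nat \<Rightarrow> real) (y::nat \<Rightarrow> real).
      0 < \<delta> \<and> \<delta> \<le> 1 \<and> real k \<ge> 12 / \<delta>^2 \<and> m \<ge> 4 \<and>
      (\<Sum>j<k. (y j)^2) = 1
      \<longrightarrow> (\<exists>J. J \<subseteq> {..<k} \<and> real (card J) \<le> \<delta> * real k \<and>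
            (1 / C) * \<delta>^2 * (MIN l\<in>{..<m}. \<bar>mat_vec k T y l\<bar>)
              \<le> (MAX (i, j)\<in>{..<m} \<times> {..<k}. \<bar>T i j\<bar>) / sqrt (real k)
                 + kth_largest (m div 4) {..<m}
                     (\<lambda>l. \<bar>mat_vec k T (coord_proj J y) l\<bar>)))"
proof (intro exI[of _ "10^7"] conjI allI impI)
  show "(10::real)^7 > 0" by simp
next
  fix \<delta> :: real and k m :: nat and T :: "nat \<Rightarrow> nat \<Rightarrow> real" and y :: "nat \<Rightarrow> real"
  assume H: "0 < \<delta> \<and> \<delta> \<le> 1 \<and> real k \<ge> 12 / \<delta>^2 \<and> m \<ge> 4 \<and> (\<Sum>j<k. (y j)^2) = 1"
  then show "\<exists>J. J \<subseteq> {..<k} \<and> real (card J) \<le> \<delta> * real k \<and>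
            (1 / 10^7) * \<delta>^2 * (MIN l\<in>{..<m}. \<bar>mat_vec k T y l\<bar>)
              \<le> (MAX (i, j)\<in>{..<m} \<times> {..<k}. \<bar>T i j\<bar>) / sqrt (real k)
                 + kth_largest (m div 4) {..<m}
                     (\<lambda>l. \<bar>mat_vec k T (coord_proj J y) l\<bar>)"
    using core[of \<delta> k m y T] by auto
qed

end
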